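(* Let $m\ge 1$, $N=2^m$, let $\mathcal{A}\subseteq[0,N-1]$ with complement $\mathcal{A}^c=[0,N-1]\setminus\mathcal{A}$, and let $\mathbf{P}\in\mathbb{F}_2^{N\times N}$ be upper triangular with all diagonal entries equal to $1$. Then $$\mathcal{C}_{\mathbf{P}\boldsymbol{G}_N}(\mathcal{A})^{\perp}=\mathcal{C}_{(\mathbf{P}^{t})^{-1}\boldsymbol{G}_N\mathbf{Q}_{\pi}\boldsymbol{G}_N}(\mathcal{A}^c).$$
   Context: $[\ell,u]=\{\ell,\ell+1,\dots,u\}$. $\boldsymbol{G}_N=\begin{pmatrix}1&0\\1&1\end{pmatrix}^{\otimes m}$ over $\mathbb{F}_2$, rows and columns indexed by $0,\dots,N-1$. For a matrix $\mathbf{B}\in\mathbb{F}_2^{N\times N}$ and a set $\mathcal{S}\subseteq[0,N-1]$, $\mathcal{C}_{\mathbf{B}}(\mathcal{S})$ denotes the binary linear code spanned by the rows of $\mathbf{B}$ with indices in $\mathcal{S}$. The code $\mathcal{C}_{\mathbf{P}\boldsymbol{G}_N}(\mathcal{A})$ with $\mathbf{P}$ upper triangular with unit diagonal is called an upper polynomial polar code. $\mathbf{Q}_{\pi}$ is the $N\times N$ permutation matrix of the permutation $\pi$ of $[0,N-1]$ swapping $i$ and $N-1-i$ for every $i$. $\perp$ denotes the dual code with respect to the standard inner product $\boldsymbol{v}\cdot\boldsymbol{w}=\sum_i v_iw_i$ over $\mathbb{F}_2$; $\mathbf{P}^t$ is the transpose. *)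

theory Defs
  imports "HOL-Library.Z2" "Jordan_Normal_Form.Matrix"
begin

definition kron_mat :: "'a::times mat \<Rightarrow> 'a mat \<Rightarrow> 'a mat" where
  "kron_mat A B = mat (dim_row A * dim_row B) (dim_col A * dim_col B)
     (\<lambda>(i,j). A $$ (i div dim_row B, j div dim_col B) * B $$ (i mod dim_row B, j mod dim_col B))"

fun kron_pow :: "'a::{zero,one,times} mat \<Rightarrow> nat \<Rightarrow> 'a mat" where
  "kron_pow A 0 = 1\<^sub>m 1"
| "kron_pow A (Suc m) = kron_mat A (kron_pow A m)"

definition F2_kernel :: "bit mat" where
  "F2_kernel = mat 2 2 (\<lambda>(i,j). if j \<le> i then 1 else 0)"

definition G_mat :: "nat \<Rightarrow> bit mat" where
  "G_mat m = kron_pow F2_kernel m"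

definition Q_rev :: "nat \<Rightarrow> bit mat" where
  "Q_rev N = mat N N (\<lambda>(i,j). if j = N - 1 - i then 1 else 0)"

definition inv_mat :: "'a::semiring_1 mat \<Rightarrow> 'a mat" where
  "inv_mat A = (THE B. inverts_mat A B \<and> inverts_mat B A)"

definition row_code :: "bit mat \<Rightarrow> nat set \<Rightarrow> bit vec set" where
  "row_code B S = {v \<in> carrier_vec (dim_col B).
      \<exists>c::nat \<Rightarrow> bit. \<forall>j < dim_col B. v $ j = (\<Sum>i\<in>S. c i * B $$ (i, j))}"

definition dual_code :: "nat \<Rightarrow> bit vec set \<Rightarrow> bit vec set" where
  "dual_code n C = {v \<in> carrier_vec n. \<forall>w \<in> C. v \<bullet> w = 0}"

end

theory Submission imports Defs "Jordan_Normal_Form.Determinant" begin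

lemma sum_div_mod:
  fixes f :: "nat \<Rightarrow> nat \<Rightarrow> 'a::comm_monoid_add"
  assumes q: "q > 0"
  shows "(\<Sum>k<b*q. f (k div q) (k mod q)) = (\<Sum>x<b. \<Sum>y<q. f x y)"
proof -
  let ?g = "\<lambda>k. f (k div q) (k mod q)"
  have "(\<Sum>k<b*q. ?g k) = (\<Sum>x<b. sum ?g {x*q..<x*q+q})"
    by (rule sum.nat_group[symmetric])
  also have "\<dots> = (\<Sum>x<b. \<Sum>y<q. f x y)"
  proof (rule sum.cong[OF refl])
    fix x
    have "sum ?g {x*q..<x*q+q} = sum ?g {0+x*q..<q+x*q}" by (simp add: add.commute)
    also have "\<dots> = (\<Sum>y\<in>{0..<q}. ?g (y + x*q))" by (rule sum.shift_bounds_nat_ivl)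
    also have "\<dots> = (\<Sum>y\<in>{0..<q}. f x y)"
      by (rule sum.cong[OF refl]) (use q in simp)
    finally show "sum ?g {x*q..<x*q+q} = (\<Sum>y<q. f x y)" by (simp add: atLeast0LessThan)
  qed
  finally show ?thesis .
qed
lemma mult_entry:
  assumes "A \<in> carrier_mat n k" "B \<in> carrier_mat k l" "i < n" "j < l"
  shows "(A*B)$$(i,j) = (\<Sum>t<k. A$$(i,t)*B$$(t,j))"
  using assms by (auto simp: scalar_prod_def atLeast0LessThan intro!: sum.cong)

lemma kron_carrier:
  assumes "A \<in> carrier_mat a b" "B \<in> carrier_mat p q"
  shows "kron_mat A B \<in> carrier_mat (a*p) (b*q)"
  using assms by (simp add: kron_mat_def)

lemma kron_index:
  assumes "A \<in> carrier_mat a b" "B \<in> carrier_mat p q" "i < a*p" "j < b*q"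
  shows "kron_mat A B $$ (i,j) = A$$(i div p, j div q) * B$$(i mod p, j mod q)"
  using assms by (simp add: kron_mat_def)

lemma kron_mult:
  fixes A B C D :: "'a::comm_semiring_1 mat"
  assumes A: "A \<in> carrier_mat a b" and C: "C \<in> carrier_mat b c"
    and B: "B \<in> carrier_mat p q" and D: "D \<in> carrier_mat q r" and q: "q > 0" and r: "r > 0"
  shows "kron_mat A B * kron_mat C D = kron_mat (A*C) (B*D)"
proof (rule eq_matI)
  show "dim_row (kron_mat A B * kron_mat C D) = dim_row (kron_mat (A*C) (B*D))"
    using assms by (simp add: kron_mat_def)
  show "dim_col (kron_mat A B * kron_mat C D) = dim_col (kron_mat (A*C) (B*D))"
    using assms by (simp add: kron_mat_def)
  fix i j assume i: "i < dim_row (kron_mat (A*C) (B*D))" and j: "j < dim_col (kron_mat (A*C) (B*D))"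
  then have i: "i < a*p" and j: "j < c*r" using assms by (auto simp: kron_mat_def)
  have p: "p > 0" using i by (cases p) auto
  have ip: "i div p < a" "i mod p < p" using i p by (auto simp: less_mult_imp_div_less)
  have jr: "j div r < c" "j mod r < r" using j r by (auto simp: less_mult_imp_div_less)
  have "(kron_mat A B * kron_mat C D) $$ (i,j) =
     (\<Sum>t<b*q. kron_mat A B $$ (i,t) * kron_mat C D $$ (t,j))"
    by (rule mult_entry[OF kron_carrier[OF A B] kron_carrier[OF C D] i j])
  also have "\<dots> = (\<Sum>t<b*q. (A$$(i div p, t div q) * B$$(i mod p, t mod q)) * (C$$(t div q, j div r) * D$$(t mod q, j mod r)))"
  proof (rule sum.cong[OF refl])
    fix t assume "t \<in> {..<b*q}"
    then show "kron_mat A B $$ (i,t) * kron_mat C D $$ (t,j) = (A$$(i div p, t div q) * B$$(i mod p, t mod q)) * (C$$(t div q, j div r) * D$$(t mod q, j mod r))"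
      using kron_index[OF A B i, of t] kron_index[OF C D _ j, of t] by simp
  qed
  also have "\<dots> = (\<Sum>x<b. \<Sum>y<q. (A$$(i div p, x) * B$$(i mod p, y)) * (C$$(x, j div r) * D$$(y, j mod r)))"
    by (rule sum_div_mod[OF q, where f="\<lambda>x y. (A$$(i div p, x) * B$$(i mod p, y)) * (C$$(x, j div r) * D$$(y, j mod r))"])
  also have "\<dots> = (\<Sum>x<b. A$$(i div p, x) * C$$(x, j div r)) * (\<Sum>y<q. B$$(i mod p, y) * D$$(y, j mod r))"
    by (simp add: sum_product mult_ac)
  also have "\<dots> = (A*C)$$(i div p, j div r) * (B*D)$$(i mod p, j mod r)"
    using mult_entry[OF A C ip(1) jr(1)] mult_entry[OF B D ip(2) jr(2)] by simp
  also have "\<dots> = kron_mat (A*C) (B*D) $$ (i,j)"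
    using kron_index[OF mult_carrier_mat[OF A C] mult_carrier_mat[OF B D] i j] by simp
  finally show "(kron_mat A B * kron_mat C D) $$ (i,j) = kron_mat (A*C) (B*D) $$ (i,j)" .
qed

lemma kron_pow_carrier:
  assumes "A \<in> carrier_mat n n"
  shows "kron_pow A m \<in> carrier_mat (n^m) (n^m)"
  by (induction m) (use assms kron_carrier in auto)

lemma kron_pow_mult:
  fixes A C :: "'a::comm_semiring_1 mat"
  assumes A: "A \<in> carrier_mat n n" and C: "C \<in> carrier_mat n n" and n: "n > 0"
  shows "kron_pow A m * kron_pow C m = kron_pow (A*C) m"
proof (induction m)
  case 0 then show ?case by simp
next
  case (Suc m)
  have "kron_pow A (Suc m) * kron_pow C (Suc m) = kron_mat (A*C) (kron_pow A m * kron_pow C m)"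
    using kron_mult[OF A C kron_pow_carrier[OF A, of m] kron_pow_carrier[OF C, of m]] n by simp
  then show ?case using Suc by simp
qed

lemma kron_transpose:
  assumes "A \<in> carrier_mat a b" "B \<in> carrier_mat p q"
  shows "transpose_mat (kron_mat A B) = kron_mat (transpose_mat A) (transpose_mat B)"
proof (rule eq_matI)
  fix i j assume "i < dim_row (kron_mat (transpose_mat A) (transpose_mat B))"
    "j < dim_col (kron_mat (transpose_mat A) (transpose_mat B))"
  then have i: "i < b*q" and j: "j < a*p" using assms by (auto simp: kron_mat_def)
  have q: "q > 0" using i by (cases q) auto
  have p: "p > 0" using j by (cases p) auto
  have "i div q < b" "j div p < a" using i j by (auto simp: less_mult_imp_div_less)
  then show "transpose_mat (kron_mat A B) $$ (i,j) = kron_mat (transpose_mat A) (transpose_mat B) $$ (i,j)"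
    using assms i j p q by (auto simp: kron_mat_def)
qed (use assms in \<open>auto simp: kron_mat_def\<close>)

lemma kron_pow_transpose:
  assumes A: "A \<in> carrier_mat n n"
  shows "transpose_mat (kron_pow A m) = kron_pow (transpose_mat A) m"
proof (induction m)
  case 0 then show ?case by simp
next
  case (Suc m)
  then show ?case using kron_transpose[OF A kron_pow_carrier[OF A, of m]] by simp
qed

lemma kron_one:
  assumes "b > 0"
  shows "kron_mat (1\<^sub>m a) (1\<^sub>m b) = (1\<^sub>m (a*b) :: 'a::{zero,one,times,mult_zero,monoid_mult} mat)"
proof (rule eq_matI)
  fix i j assume "i < dim_row (1\<^sub>m (a*b) :: 'a mat)" "j < dim_col (1\<^sub>m (a*b) :: 'a mat)"
  then have i: "i < a*b" and j: "j < a*b" by auto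
  have "i div b < a" "j div b < a" using i j by (auto simp: less_mult_imp_div_less)
  moreover have "(i div b = j div b \<and> i mod b = j mod b) = (i = j)"
    by (metis div_mult_mod_eq)
  ultimately show "kron_mat (1\<^sub>m a) (1\<^sub>m b) $$ (i, j) = (1\<^sub>m (a*b) :: 'a mat) $$ (i, j)"
    using i j assms by (auto simp: kron_mat_def)
qed (auto simp: kron_mat_def)

lemma kron_pow_one:
  assumes "n > 0"
  shows "kron_pow (1\<^sub>m n :: 'a::{comm_semiring_1} mat) m = 1\<^sub>m (n^m)"
  by (induction m) (use assms in \<open>auto simp: kron_one\<close>)

lemma F_carrier: "F2_kernel \<in> carrier_mat 2 2" by (simp add: F2_kernel_def)
lemma J_carrier: "Q_rev 2 \<in> carrier_mat 2 2" by (simp add: Q_rev_def)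

lemma two_cases: "(i::nat) < 2 \<Longrightarrow> i = 0 \<or> i = 1" by auto

lemma mult2:
  assumes "A \<in> carrier_mat 2 2" "B \<in> carrier_mat 2 2" "i < 2" "j < 2"
  shows "(A*B) $$ (i,j) = A $$ (i,0) * B $$ (0,j) + A $$ (i,1) * B $$ (1,j)"
  using mult_entry[OF assms] by (simp add: numeral_2_eq_2)

lemma FF: "F2_kernel * F2_kernel = 1\<^sub>m 2"
proof (rule eq_matI)
  fix i j assume "i < dim_row (1\<^sub>m 2 :: bit mat)" "j < dim_col (1\<^sub>m 2 :: bit mat)"
  then have "i < 2" "j < 2" by auto
  then show "(F2_kernel * F2_kernel) $$ (i,j) = (1\<^sub>m 2 :: bit mat) $$ (i,j)"
  proof -
    have e: "(F2_kernel * F2_kernel) $$ (i,j) = F2_kernel $$ (i,0) * F2_kernel $$ (0,j) + F2_kernel $$ (i,1) * F2_kernel $$ (1,j)"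
      using mult_entry[OF F_carrier F_carrier \<open>i<2\<close> \<open>j<2\<close>] by (simp add: numeral_2_eq_2)
    show ?thesis using two_cases[OF \<open>i<2\<close>] two_cases[OF \<open>j<2\<close>] unfolding e
      by (auto simp: F2_kernel_def)
  qed
qed (auto simp: F2_kernel_def)

lemma FJF: "F2_kernel * Q_rev 2 * F2_kernel = transpose_mat F2_kernel"
proof (rule eq_matI)
  fix i j assume "i < dim_row (transpose_mat F2_kernel)" "j < dim_col (transpose_mat F2_kernel)"
  then have ij: "i < 2" "j < 2" by (auto simp: F2_kernel_def)
  have FJ: "F2_kernel * Q_rev 2 = mat 2 2 (\<lambda>(i,j). if (i = 0 \<and> j = 1) \<or> i = 1 then 1 else 0)"
  proof (rule eq_matI)
    fix i j assume "i < dim_row (mat 2 2 (\<lambda>(i,j). if (i = 0 \<and> j = 1) \<or> i = 1 then 1 else (0::bit)))"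
       "j < dim_col (mat 2 2 (\<lambda>(i,j). if (i = 0 \<and> j = 1) \<or> i = 1 then 1 else (0::bit)))"
    then have "i < 2" "j < 2" by auto
    then show "(F2_kernel * Q_rev 2) $$ (i,j) = mat 2 2 (\<lambda>(i,j). if (i = 0 \<and> j = 1) \<or> i = 1 then 1 else (0::bit)) $$ (i,j)"
      using two_cases[OF \<open>i<2\<close>] two_cases[OF \<open>j<2\<close>] unfolding mult2[OF F_carrier J_carrier \<open>i<2\<close> \<open>j<2\<close>]
      by (auto simp: F2_kernel_def Q_rev_def)
  qed (auto simp: F2_kernel_def Q_rev_def)
  have c: "mat 2 2 (\<lambda>(i,j). if (i = 0 \<and> j = 1) \<or> i = 1 then 1 else (0::bit)) \<in> carrier_mat 2 2" by simp
  show "(F2_kernel * Q_rev 2 * F2_kernel) $$ (i,j) = transpose_mat F2_kernel $$ (i,j)"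
    unfolding FJ mult2[OF c F_carrier ij] using two_cases[OF ij(1)] two_cases[OF ij(2)] 
    by (auto simp: F2_kernel_def)
qed (auto simp: F2_kernel_def Q_rev_def)

lemma rev_arith:
  assumes n: "(n::nat) > 0" and i: "i < 2*n" and j: "j < 2*n"
  shows "(j = 2*n - 1 - i) = (j div n = 1 - i div n \<and> j mod n = n - 1 - i mod n)"
proof -
  have A: "x < n \<Longrightarrow> x div n = 0 \<and> x mod n = x" for x by simp
  have B: "n \<le> x \<Longrightarrow> x < 2*n \<Longrightarrow> x div n = 1 \<and> x mod n = x - n" for x
  proof -
    assume a: "n \<le> x" "x < 2*n"
    then have "x - n < n" by simp
    then show ?thesis using a n by (simp add: le_div_geq le_mod_geq)
  qed
  show ?thesis
    using A[of i] A[of j] B[of i] B[of j] i j n by (cases "i < n"; cases "j < n") auto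
qed

lemma Q_kron: "Q_rev (2^m) = kron_pow (Q_rev 2) m"
proof (induction m)
  case 0 then show ?case by (auto simp: Q_rev_def)
next
  case (Suc m)
  let ?n = "2^m :: nat"
  have n: "?n > 0" by simp
  have "Q_rev (2^Suc m) = kron_mat (Q_rev 2) (Q_rev ?n)"
  proof (rule eq_matI)
    fix i j assume "i < dim_row (kron_mat (Q_rev 2) (Q_rev ?n))" "j < dim_col (kron_mat (Q_rev 2) (Q_rev ?n))"
    then have i: "i < 2*?n" and j: "j < 2*?n" by (auto simp: kron_mat_def Q_rev_def)
    have "i div ?n < 2" "j div ?n < 2" using i j by (auto simp: less_mult_imp_div_less)
    then show "Q_rev (2^Suc m) $$ (i,j) = kron_mat (Q_rev 2) (Q_rev ?n) $$ (i,j)"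
      using i j rev_arith[OF n i j] by (auto simp: kron_mat_def Q_rev_def)
  qed (auto simp: kron_mat_def Q_rev_def)
  then show ?case using Suc by simp
qed

lemma G_carrier: "G_mat m \<in> carrier_mat (2^m) (2^m)"
  unfolding G_mat_def using kron_pow_carrier[OF F_carrier] .

lemma GG: "G_mat m * G_mat m = 1\<^sub>m (2^m)"
  unfolding G_mat_def kron_pow_mult[OF F_carrier F_carrier, simplified] FF
  by (rule kron_pow_one) simp

lemma GQG: "G_mat m * Q_rev (2^m) * G_mat m = transpose_mat (G_mat m)"
proof -
  have "G_mat m * Q_rev (2^m) = kron_pow (F2_kernel * Q_rev 2) m"
    unfolding G_mat_def Q_kron by (rule kron_pow_mult[OF F_carrier J_carrier]) simp
  also have "\<dots> * G_mat m = kron_pow (F2_kernel * Q_rev 2 * F2_kernel) m"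
    unfolding G_mat_def
    by (rule kron_pow_mult[OF mult_carrier_mat[OF F_carrier J_carrier] F_carrier]) simp
  finally show ?thesis
    unfolding FJF G_mat_def kron_pow_transpose[OF F_carrier] .
qed

lemma dual_lemma:
  fixes B M :: "bit mat"
  assumes B: "B \<in> carrier_mat n n" and M: "M \<in> carrier_mat n n"
    and BM: "B * transpose_mat M = 1\<^sub>m n" and MB: "transpose_mat M * B = 1\<^sub>m n"
    and S: "S \<subseteq> {0..<n}"
  shows "dual_code n (row_code B S) = row_code M ({0..<n} - S)"
proof
  have fS: "finite S" using S finite_subset by blast
  have fT: "finite ({0..<n} - S)" by simp
  show "row_code M ({0..<n} - S) \<subseteq> dual_code n (row_code B S)"
  proof
    fix v assume "v \<in> row_code M ({0..<n} - S)"
    then obtain c where v: "v \<in> carrier_vec n" and vc: "\<forall>k<n. v $ k = (\<Sum>j\<in>{0..<n} - S. c j * M $$ (j,k))"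
      using M unfolding row_code_def by auto
    have "v \<bullet> w = 0" if w: "w \<in> row_code B S" for w
    proof -
      obtain d where w: "w \<in> carrier_vec n" and wd: "\<forall>k<n. w $ k = (\<Sum>i\<in>S. d i * B $$ (i,k))"
        using B w unfolding row_code_def by auto
      have "v \<bullet> w = (\<Sum>k\<in>{0..<n}. v $ k * w $ k)" using w by (simp add: scalar_prod_def)
      also have "\<dots> = (\<Sum>k\<in>{0..<n}. (\<Sum>j\<in>{0..<n} - S. c j * M $$ (j,k)) * (\<Sum>i\<in>S. d i * B $$ (i,k)))"
        using vc wd by (intro sum.cong) auto
      also have "\<dots> = (\<Sum>k\<in>{0..<n}. \<Sum>j\<in>{0..<n} - S. \<Sum>i\<in>S. (c j * M $$ (j,k)) * (d i * B $$ (i,k)))"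
        by (simp only: sum_product)
      also have "\<dots> = (\<Sum>j\<in>{0..<n} - S. \<Sum>k\<in>{0..<n}. \<Sum>i\<in>S. (c j * M $$ (j,k)) * (d i * B $$ (i,k)))"
        by (rule sum.swap)
      also have "\<dots> = (\<Sum>j\<in>{0..<n} - S. \<Sum>i\<in>S. \<Sum>k\<in>{0..<n}. (c j * M $$ (j,k)) * (d i * B $$ (i,k)))"
        by (rule sum.cong[OF refl], rule sum.swap)
      also have "\<dots> = (\<Sum>j\<in>{0..<n} - S. \<Sum>i\<in>S. c j * d i * (\<Sum>k\<in>{0..<n}. B $$ (i,k) * M $$ (j,k)))"
        unfolding sum_distrib_left by (intro sum.cong refl) (simp only: mult_ac)
      also have "\<dots> = 0"
      proof (intro sum.neutral ballI)
        fix j i assume j: "j \<in> {0..<n} - S" and i: "i \<in> S"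
        have "(\<Sum>k\<in>{0..<n}. B $$ (i,k) * M $$ (j,k)) = (B * transpose_mat M) $$ (i,j)"
          using mult_entry[OF B transpose_carrier_mat[THEN iffD2, OF M], of i j] i j S M
          by (auto simp: atLeast0LessThan)
        also have "\<dots> = 0" using BM i j S by auto
        finally show "c j * d i * (\<Sum>k\<in>{0..<n}. B $$ (i,k) * M $$ (j,k)) = 0" by simp
      qed
      finally show ?thesis .
    qed
    then show "v \<in> dual_code n (row_code B S)" using v unfolding dual_code_def by auto
  qed
  show "dual_code n (row_code B S) \<subseteq> row_code M ({0..<n} - S)"
  proof
    fix v assume "v \<in> dual_code n (row_code B S)"
    then have v: "v \<in> carrier_vec n" and orth: "\<And>w. w \<in> row_code B S \<Longrightarrow> v \<bullet> w = 0"
      unfolding dual_code_def by auto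
    define c where "c j = (\<Sum>l\<in>{0..<n}. B $$ (j,l) * v $ l)" for j
    have c0: "c j = 0" if j: "j \<in> S" for j
    proof -
      have jn: "j < n" using j S by auto
      have "row B j \<in> row_code B S"
        unfolding row_code_def
      proof (intro CollectI conjI exI[of _ "\<lambda>i. if i = j then 1 else 0"] allI impI)
        show "row B j \<in> carrier_vec (dim_col B)" by simp
        fix k assume "k < dim_col B"
        then show "row B j $ k = (\<Sum>i\<in>S. (if i = j then 1 else 0) * B $$ (i, k))"
        proof -
          have "(\<Sum>i\<in>S. (if i = j then 1 else 0) * B $$ (i, k)) = (\<Sum>i\<in>S. if i = j then B $$ (i, k) else 0)"
            by (intro sum.cong refl) (simp del: mult_bit_eq_and add_bit_eq_xor)
          also have "\<dots> = B $$ (j,k)" using fS j by (simp add: sum.delta')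
          also have "\<dots> = row B j $ k" using \<open>k < dim_col B\<close> jn B by simp
          finally show ?thesis by (rule sym)
        qed
      qed
      then have "v \<bullet> row B j = 0" by (rule orth)
      moreover have "v \<bullet> row B j = (\<Sum>l\<in>{0..<n}. v $ l * B $$ (j,l))"
        unfolding scalar_prod_def using B jn by (intro sum.cong) auto
      moreover have "c j = (\<Sum>l\<in>{0..<n}. v $ l * B $$ (j,l))"
        unfolding c_def by (intro sum.cong refl) (simp only: mult_ac)
      ultimately show ?thesis by simp
    qed
    have "v $ k = (\<Sum>j\<in>{0..<n} - S. c j * M $$ (j,k))" if k: "k < n" for k
    proof -
      have "(\<Sum>j\<in>{0..<n} - S. c j * M $$ (j,k)) = (\<Sum>j\<in>{0..<n}. c j * M $$ (j,k))"
        using S c0 by (intro sum.mono_neutral_left) auto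
      also have "\<dots> = (\<Sum>j\<in>{0..<n}. \<Sum>l\<in>{0..<n}. M $$ (j,k) * B $$ (j,l) * v $ l)"
        unfolding c_def sum_distrib_right by (intro sum.cong refl) (simp only: mult_ac)
      also have "\<dots> = (\<Sum>l\<in>{0..<n}. \<Sum>j\<in>{0..<n}. M $$ (j,k) * B $$ (j,l) * v $ l)"
        by (rule sum.swap)
      also have "\<dots> = (\<Sum>l\<in>{0..<n}. (\<Sum>j\<in>{0..<n}. M $$ (j,k) * B $$ (j,l)) * v $ l)"
        unfolding sum_distrib_right ..
      also have "\<dots> = (\<Sum>l\<in>{0..<n}. (if k = l then 1 else 0) * v $ l)"
      proof (rule sum.cong[OF refl])
        fix l assume l: "l \<in> {0..<n}"
        have "(\<Sum>j\<in>{0..<n}. M $$ (j,k) * B $$ (j,l)) = (transpose_mat M * B) $$ (k,l)"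
          using mult_entry[OF transpose_carrier_mat[THEN iffD2, OF M] B, of k l] k l M
          by (auto simp: atLeast0LessThan)
        also have "\<dots> = (if k = l then 1 else 0)" using MB k l by auto
        finally show "(\<Sum>j\<in>{0..<n}. M $$ (j,k) * B $$ (j,l)) * v $ l = (if k = l then 1 else 0) * v $ l" by simp
      qed
      also have "\<dots> = (\<Sum>l\<in>{0..<n}. if k = l then v $ l else 0)"
        by (intro sum.cong refl) (simp del: mult_bit_eq_and add_bit_eq_xor)
      also have "\<dots> = v $ k" using k by (simp add: sum.delta)
      finally show ?thesis by (rule sym)
    qed
    then show "v \<in> row_code M ({0..<n} - S)"
      unfolding row_code_def using v M by auto
  qed
qed

theorem theorem1:
  fixes m N :: nat and A :: "nat set" and P :: "bit mat"
  assumes "m \<ge> 1" and "N = 2 ^ m"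
    and "A \<subseteq> {0..<N}"
    and "P \<in> carrier_mat N N"
    and "upper_triangular P"
    and "\<forall>i < N. P $$ (i, i) = 1"
  shows "dual_code N (row_code (P * G_mat m) A) =
         row_code (inv_mat (transpose_mat P) * G_mat m * Q_rev N * G_mat m) ({0..<N} - A)"
proof -
  note PC = assms(4)
  have G: "G_mat m \<in> carrier_mat N N" using G_carrier assms(2) by simp
  have Q: "Q_rev N \<in> carrier_mat N N" by (simp add: Q_rev_def)
  have PT: "transpose_mat P \<in> carrier_mat N N" using PC by simp
  have "diag_mat P = replicate N 1"
    using PC assms(6) by (intro nth_equalityI) (auto simp: diag_mat_def)
  then have "det P = 1" using det_upper_triangular[OF assms(5) PC] by simp
  then have "det (transpose_mat P) \<noteq> 0" using det_transpose[OF PC] by simp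
  from det_non_zero_imp_unit[OF PT this, of "()"]
  obtain X where X: "X \<in> carrier_mat N N" and XP: "X * transpose_mat P = 1\<^sub>m N"
    and PX: "transpose_mat P * X = 1\<^sub>m N"
    unfolding Units_def ring_mat_def by auto
  have inv: "inv_mat (transpose_mat P) = X"
    unfolding inv_mat_def
  proof (rule the_equality)
    show "inverts_mat (transpose_mat P) X \<and> inverts_mat X (transpose_mat P)"
      using XP PX X PC by (simp add: inverts_mat_def)
  next
    fix Y assume Y: "inverts_mat (transpose_mat P) Y \<and> inverts_mat Y (transpose_mat P)"
    then have PY: "transpose_mat P * Y = 1\<^sub>m N" and YP: "Y * transpose_mat P = 1\<^sub>m (dim_row Y)"
      using PC by (auto simp: inverts_mat_def)
    have "dim_col Y = N" using arg_cong[OF PY, of dim_col] by simp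
    moreover have "dim_row Y = N" using arg_cong[OF YP, of dim_col] PC by simp
    ultimately have YC: "Y \<in> carrier_mat N N" by auto
    have "Y = Y * (transpose_mat P * X)" using PX YC by simp
    also have "\<dots> = (Y * transpose_mat P) * X" using YC PT X by simp
    also have "\<dots> = X" using YP YC X by simp
    finally show "Y = X" .
  qed
  let ?B = "P * G_mat m"
  let ?M = "inv_mat (transpose_mat P) * G_mat m * Q_rev N * G_mat m"
  have GQG': "G_mat m * Q_rev N * G_mat m = transpose_mat (G_mat m)"
    using GQG assms(2) by simp
  have M: "?M = X * transpose_mat (G_mat m)"
    unfolding inv using X G Q GQG' by (simp add: assoc_mult_mat[of _ N N _ N _ N])
  have MT: "transpose_mat ?M = G_mat m * transpose_mat X"
    unfolding M using transpose_mult[OF X transpose_carrier_mat[THEN iffD2, OF G]] by simp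
  have GG': "G_mat m * G_mat m = 1\<^sub>m N" using GG assms(2) by simp
  have XTP: "transpose_mat X * P = 1\<^sub>m N"
    using arg_cong[OF PX, of transpose_mat] transpose_mult[OF PT X] by simp
  have PXT: "P * transpose_mat X = 1\<^sub>m N"
    using arg_cong[OF XP, of transpose_mat] transpose_mult[OF X PT] by simp
  have XT: "transpose_mat X \<in> carrier_mat N N" using X by simp
  have BC: "?B \<in> carrier_mat N N" using PC G by simp
  have MC: "?M \<in> carrier_mat N N" unfolding M using X G by simp
  have BM: "?B * transpose_mat ?M = 1\<^sub>m N"
  proof -
    have "?B * transpose_mat ?M = P * (G_mat m * G_mat m) * transpose_mat X"
      unfolding MT using PC G XT by (simp add: assoc_mult_mat[of _ N N _ N _ N])
    also have "\<dots> = 1\<^sub>m N" unfolding GG' using PC PXT by simp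
    finally show ?thesis .
  qed
  have MB: "transpose_mat ?M * ?B = 1\<^sub>m N"
  proof -
    have "transpose_mat ?M * ?B = G_mat m * (transpose_mat X * P) * G_mat m"
      unfolding MT using PC G XT by (simp add: assoc_mult_mat[of _ N N _ N _ N])
    also have "\<dots> = 1\<^sub>m N" unfolding XTP using G GG' by simp
    finally show ?thesis .
  qed
  show ?thesis by (rule dual_lemma[OF BC MC BM MB assms(3)])
qed

end
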